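(* Let $n>0$ and $c>1$. In the no-communication setting, every deterministic algorithm that guarantees rendezvous of the two agents for all initial placements on the cycle of length $n$ has rendezvous time at least $\frac{cn}{c^2-1}$.
   Context: Model: the cycle is the continuous circle $\mathbb{R}/n\mathbb{Z}$ of length $n$; it is anonymous (no marked points). Two agents $A$ and $B$ are placed by an adversary at arbitrary initial points and start at the same time. Both run the same deterministic algorithm; they are identical except for their speeds: the slower agent $B$ has speed $1$ and the faster agent $A$ has speed $c>1$ (an agent does not know whether it is the faster or the slower one). Both agents know $n$ and $c$, have a common sense of direction (clockwise vs. anti-clockwise), and have a pedometer measuring the total distance they have travelled (a "step" is one unit of travelled distance, possibly split among directions). At any moment an agent may start moving, continue, stop, or reverse direction; an agent's behaviour is a deterministic function of its own travelled distance (equivalently, its local step count) and of what it has observed so far, so that, absent any observation, an agent of speed $s$ is at real time $t$ where an agent of speed $1$ running the same algorithm would be at time $st$. Agents detect each other when they are at the same point (rendezvous). No-communication setting: the agents cannot observe anything other than the other agent being at their current location (no markers of any kind). The rendezvous time of an algorithm is the worst case, over all initial placements of the two agents, of the time until the agents are co-located. *)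

theory Defs
  imports "HOL-Analysis.Analysis"
begin

text \<open>Cycle R/nZ: a point is represented by any real lift; two lifts denote the same
point iff they differ by an integer multiple of n.\<close>
definition same_point :: "real \<Rightarrow> real \<Rightarrow> real \<Rightarrow> bool" where
  "same_point n x y \<longleftrightarrow> (\<exists>k::int. x - y = of_int k * n)"

text \<open>No-communication algorithm: before rendezvous nothing is observed, so a deterministic
algorithm is described by its trajectory f: the (lifted, signed) displacement from the start
point of a speed-1 agent as a function of its local time.\<close>
definition valid_algorithm :: "(real \<Rightarrow> real) \<Rightarrow> bool" where
  "valid_algorithm f \<longleftrightarrow> f 0 = 0 \<and> (\<forall>s\<ge>0. \<forall>t\<ge>0. \<bar>f s - f t\<bar> \<le> \<bar>s - t\<bar>)"

definition position :: "(real \<Rightarrow> real) \<Rightarrow> real \<Rightarrow> real \<Rightarrow> real \<Rightarrow> real" where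
  "position f s x t = x + f (s * t)"

definition meet_at :: "(real \<Rightarrow> real) \<Rightarrow> real \<Rightarrow> real \<Rightarrow> real \<Rightarrow> real \<Rightarrow> real \<Rightarrow> bool" where
  "meet_at f n c xA xB t \<longleftrightarrow> same_point n (position f c xA t) (position f 1 xB t)"

definition guarantees_rendezvous :: "(real \<Rightarrow> real) \<Rightarrow> real \<Rightarrow> real \<Rightarrow> bool" where
  "guarantees_rendezvous f n c \<longleftrightarrow> (\<forall>xA xB. \<exists>t\<ge>0. meet_at f n c xA xB t)"

definition rendezvous_time :: "(real \<Rightarrow> real) \<Rightarrow> real \<Rightarrow> real \<Rightarrow> ereal" where
  "rendezvous_time f n c =
     (SUP p \<in> (UNIV :: (real \<times> real) set).
        INF t \<in> {t. t \<ge> 0 \<and> meet_at f n c (fst p) (snd p) t}. ereal t)"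

end

theory Submission
  imports Defs
begin

lemma key:
  fixes f :: "real \<Rightarrow> real" and c s t :: real
  assumes v: "valid_algorithm f" and c: "c > 1" and s: "0 \<le> s" and st: "s \<le> t"
  shows "abs ((f (c * t) - f t) - (f (c * s) - f s)) \<le> (c\<^sup>2 - 1) * t / c"
proof -
  have L: "\<And>a b. a \<ge> 0 \<Longrightarrow> b \<ge> 0 \<Longrightarrow> abs (f a - f b) \<le> abs (a - b)"
    using v unfolding valid_algorithm_def by blast
  have t0: "t \<ge> 0" using s st by linarith
  have cs: "c * s \<ge> 0" "c * t \<ge> 0" using c s t0 by auto
  have h1: "abs (f (c * s) - f s) \<le> (c - 1) * s"
    using L[OF cs(1) s] c s mult_right_mono[of 1 c s] by (simp add: abs_if algebra_simps split: if_splits)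
  have h2: "abs (f (c * t) - f t) \<le> (c-1)*t"
    using L[OF cs(2) t0] c t0 mult_right_mono[of 1 c t] by (simp add: abs_if algebra_simps split: if_splits)
  have h3: "abs (f (c * t) - f (c * s)) \<le> c*(t-s)"
    using L[OF cs(2) cs(1)] c st by (simp add: abs_if algebra_simps split: if_splits)
  have h4: "abs (f t - f s) \<le> t - s"
    using L[OF t0 s] st by simp
  have A: "abs ((f (c * t) - f t) - (f (c * s) - f s)) \<le> (c-1)*(s+t)"
  proof -
    have "abs ((f (c * t) - f t) - (f (c * s) - f s)) \<le> abs (f (c * t) - f t) + abs (f (c * s) - f s)"
      by (rule abs_triangle_ineq4)
    also have "\<dots> \<le> (c - 1) * t + (c - 1) * s" using h1 h2 by (rule add_mono[rotated])
    also have "\<dots> = (c-1)*(s+t)" by (simp add: algebra_simps)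
    finally show ?thesis .
  qed
  have B: "abs ((f (c * t) - f t) - (f (c * s) - f s)) \<le> (c+1)*(t-s)"
  proof -
    have "(f (c * t) - f t) - (f (c * s) - f s) = (f (c * t) - f (c * s)) - (f t - f s)" by simp
    also have "abs \<dots> \<le> abs (f (c * t) - f (c * s)) + abs (f t - f s)"
      by (rule abs_triangle_ineq4)
    also have "\<dots> \<le> c * (t - s) + (t - s)" using h3 h4 by (rule add_mono)
    also have "\<dots> = (c+1)*(t-s)" by (simp add: algebra_simps)
    finally show ?thesis .
  qed
  show ?thesis
  proof (cases "c * s \<le> t")
    case True
    have "s \<le> t/c" using True c by (simp add: field_simps)
    hence "(c-1)*(s+t) \<le> (c-1)*(t/c+t)" using c by (intro mult_left_mono) auto
    also have "\<dots> = (c\<^sup>2 - 1) * t / c" using c by (simp add: field_simps power2_eq_square)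
    finally show ?thesis using A by linarith
  next
    case False
    have "t/c \<le> s" using False c by (simp add: field_simps)
    hence "(c+1)*(t-s) \<le> (c+1)*(t - t/c)" using c by (intro mult_left_mono) auto
    also have "\<dots> = (c\<^sup>2 - 1) * t / c" using c by (simp add: field_simps power2_eq_square)
    finally show ?thesis using B by linarith
  qed
qed

lemma approx:
  fixes n c T' :: real and f :: "real \<Rightarrow> real"
  assumes n: "n > 0" and c: "c > 1" and v: "valid_algorithm f"
    and T: "0 < T'" "T' < c * n / (c\<^sup>2 - 1)"
  shows "ereal T' \<le> rendezvous_time f n c"
proof -
  define g where "g t = f (c * t) - f t" for t
  define D where "D = (c\<^sup>2 - 1) * T' / c"
  have c2: "c\<^sup>2 - 1 > 0" using c by (simp add: power2_eq_square) (smt (verit) mult_less_cancel_right1)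
  have Dn: "D < n" unfolding D_def using T c c2 by (simp add: field_simps)
  have diam: "g t - g s \<le> D" if "0 \<le> s" "s < T'" "0 \<le> t" "t < T'" for s t
  proof (cases "s \<le> t")
    case True
    have "g t - g s \<le> (c\<^sup>2 - 1) * t / c" using key[OF v c that(1) True] unfolding g_def by linarith
    also have "\<dots> \<le> D" unfolding D_def using c c2 that by (intro divide_right_mono mult_left_mono) auto
    finally show ?thesis .
  next
    case False
    have "g t - g s \<le> (c\<^sup>2 - 1) * s / c" using key[OF v c that(3), of s] False unfolding g_def by (simp add: abs_diff_le_iff)
    also have "\<dots> \<le> D" unfolding D_def using c c2 that by (intro divide_right_mono mult_left_mono) auto
    finally show ?thesis .
  qed
  define S where "S = g ` {t. 0 \<le> t \<and> t < T'}"
  define M where "M = Sup S"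
  have ne: "S \<noteq> {}" unfolding S_def using T by auto
  have bdd: "bdd_above S" unfolding S_def bdd_above_def using diam[of 0] T
    by (auto intro!: exI[of _ "g 0 + D"]) (smt (verit))
  have le: "g t \<le> M" if "0 \<le> t" "t < T'" for t
    unfolding M_def using bdd that S_def by (auto intro: cSup_upper)
  have ge: "M - D \<le> g t" if "0 \<le> t" "t < T'" for t
  proof -
    have "M \<le> g t + D" unfolding M_def
      by (rule cSup_least[OF ne]) (use diam that S_def in force)
    thus ?thesis by linarith
  qed
  define y where "y = M + (n - D)/2"
  have nomeet: "\<not> meet_at f n c (-y) 0 t" if "0 \<le> t" "t < T'" for t
  proof
    assume "meet_at f n c (-y) 0 t"
    then obtain k :: int where k: "-y + f (c * t) - (0 + f (1*t)) = of_int k * n"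
      unfolding meet_at_def same_point_def position_def by auto
    hence k': "g t - y = of_int k * n" unfolding g_def by simp
    have "g t - y < 0" using le[OF that] ge[OF that] Dn unfolding y_def by (simp add: field_simps)
    moreover have "g t - y > - n" using le[OF that] ge[OF that] Dn unfolding y_def by (simp add: field_simps)
    ultimately
    have "of_int k * n < 0 * n" "of_int k * n > (-1) * n" using k' by auto
    hence "of_int k < (0::real)" "of_int k > (-1::real)" using n
      by (meson mult_less_cancel_right_pos)+
    hence "k < 0" "k > -1" by simp_all
    thus False by linarith
  qed
  have "ereal T' \<le> (INF t \<in> {t. t \<ge> 0 \<and> meet_at f n c (-y) 0 t}. ereal t)"
    by (rule INF_greatest) (use nomeet in force)
  also have "\<dots> \<le> rendezvous_time f n c" unfolding rendezvous_time_def
    by (rule SUP_upper2[of "(-y, 0)"]) auto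
  finally show ?thesis .
qed

theorem theorem1:
  fixes n c :: real and f :: "real \<Rightarrow> real"
  assumes "n > 0" and "c > 1"
    and "valid_algorithm f"
    and "guarantees_rendezvous f n c"
  shows "rendezvous_time f n c \<ge> ereal (c * n / (c\<^sup>2 - 1))"
proof (rule dense_le)
  fix y assume y: "y < ereal (c * n / (c\<^sup>2 - 1))"
  have c2: "c\<^sup>2 - 1 > 0" using assms(2) by (simp add: power2_eq_square) (smt (verit) mult_less_cancel_right1)
  have Tp: "c * n / (c\<^sup>2 - 1) > 0" using assms(1,2) c2 by simp
  show "y \<le> rendezvous_time f n c"
  proof (cases y)
    case (real r)
    define T0 where "T0 = c * n / (c\<^sup>2 - 1)"
    define T' where "T' = max r (T0 / 2)"
    have "0 < T'" "T' < c * n / (c\<^sup>2 - 1)" using y real Tp unfolding T'_def T0_def[symmetric] by auto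
    from approx[OF assms(1,2,3) this] have "ereal T' \<le> rendezvous_time f n c" .
    moreover have "y \<le> ereal T'" using real unfolding T'_def by auto
    ultimately show ?thesis by (rule order_trans[rotated])
  next
    case PInf with y show ?thesis by simp
  next
    case MInf thus ?thesis by simp
  qed
qed

end
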